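(* Let $f\colon X\to X$ be a homeomorphism of a metric space $X$ and let $k\in\mathbb{Z}$. Every Borel probability measure that is inner-distal with respect to $f$ is also inner-distal with respect to $f^k$. In particular, if $f$ is inner-distal, then $f^k$ is inner-distal.
   Context: For a homeomorphism $g$ of $(X,d)$, $\mathcal{P}_g(x)=\{y\colon \inf_{n\in\mathbb{Z}} d(g^n(x),g^n(y))=0\}$. $g$ is inner-distal if $\operatorname{Int}\mathcal{P}_g(x)=\emptyset$ for all $x$; a Borel probability measure $\mu$ is inner-distal w.r.t. $g$ if $\mu(\operatorname{Int}\mathcal{P}_g(x))=0$ for all $x$. *)

theory Defs
  imports "HOL-Probability.Probability"
begin

definition zpow :: "('a \<Rightarrow> 'a) \<Rightarrow> int \<Rightarrow> 'a \<Rightarrow> 'a" where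
  "zpow g n = (if 0 \<le> n then g ^^ nat n else (inv g) ^^ nat (- n))"

definition proximal_cell :: "('a::metric_space \<Rightarrow> 'a) \<Rightarrow> 'a \<Rightarrow> 'a set" where
  "proximal_cell g x = {y. (INF n::int. dist (zpow g n x) (zpow g n y)) = 0}"

definition inner_distal :: "('a::metric_space \<Rightarrow> 'a) \<Rightarrow> bool" where
  "inner_distal g \<longleftrightarrow> (\<forall>x. interior (proximal_cell g x) = {})"

definition inner_distal_measure :: "'a::metric_space measure \<Rightarrow> ('a \<Rightarrow> 'a) \<Rightarrow> bool" where
  "inner_distal_measure \<mu> g \<longleftrightarrow> (\<forall>x. measure \<mu> (interior (proximal_cell g x)) = 0)"

end

theory Submission
  imports Defs
begin

lemma zpow_0: "zpow h 0 = id"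
  by (simp add: zpow_def)

lemma zpow_up:
  assumes "bij h" shows "zpow h (n+1) = h \<circ> zpow h n"
proof (cases "n \<ge> 0")
  case True
  then have "nat (n+1) = Suc (nat n)" by simp
  then show ?thesis using True by (simp add: zpow_def)
next
  case False
  then have e: "nat (-n) = Suc (nat (-(n+1)))" by simp
  have hi: "h \<circ> inv h = id" using assms by (simp add: comp_def fun_eq_iff bij_is_surj surj_f_inv_f)
  show ?thesis using False
  proof -
    have "zpow h n = inv h \<circ> (inv h ^^ nat (-(n+1)))" using False by (simp add: zpow_def e)
    moreover have "zpow h (n+1) = inv h ^^ nat (-(n+1))" using False by (simp add: zpow_def)
    ultimately show ?thesis by (simp add: comp_assoc[symmetric] hi)
  qed
qed

lemma zpow_down:
  assumes "bij h" shows "zpow h (n-1) = inv h \<circ> zpow h n"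
proof (cases "n \<le> 0")
  case True
  then have "nat (-(n-1)) = Suc (nat (-n))" by simp
  then show ?thesis using True by (simp add: zpow_def)
next
  case False
  then have e: "nat n = Suc (nat (n-1))" by simp
  have ih: "inv h \<circ> h = id" using assms by (simp add: bij_is_inj inv_o_cancel)
  show ?thesis using False
    apply (cases "n = 1")
    apply (simp add: zpow_def ih)
    apply (simp add: zpow_def e o_assoc[symmetric] ih)
    apply (subst comp_assoc[symmetric], simp add: ih)
    done
qed

lemma zpow_add:
  assumes "bij h" shows "zpow h (a+b) = zpow h a \<circ> zpow h b"
proof (induction a rule: int_induct[where k=0])
  case base then show ?case by (simp add: zpow_0)
next
  case (step1 i)
  have "zpow h (i+1+b) = zpow h ((i+b)+1)" by (simp add: ac_simps)
  also have "\<dots> = h \<circ> zpow h (i+b)" using zpow_up[OF assms] by blast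
  also have "\<dots> = zpow h (i+1) \<circ> zpow h b" using step1 zpow_up[OF assms, of i] by (simp add: o_def fun_eq_iff)
  finally show ?case .
next
  case (step2 i)
  have "zpow h (i-1+b) = zpow h ((i+b)-1)" by (simp add: algebra_simps)
  also have "\<dots> = inv h \<circ> zpow h (i+b)" using zpow_down[OF assms] by blast
  also have "\<dots> = zpow h (i-1) \<circ> zpow h b" using step2 zpow_down[OF assms, of i] by (simp add: o_def fun_eq_iff)
  finally show ?case .
qed

lemma zpow_mult:
  assumes "bij h" shows "zpow (zpow h k) n = zpow h (k*n)"
proof -
  have a: "zpow h k \<circ> zpow h (-k) = id" "zpow h (-k) \<circ> zpow h k = id"
    using zpow_add[OF assms, of k "-k"] zpow_add[OF assms, of "-k" k] by (simp_all add: zpow_0)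
  then have bk: "bij (zpow h k)" using o_bij by blast
  have ik: "inv (zpow h k) = zpow h (-k)"
    using a by (metis inv_unique_comp)
  show ?thesis
  proof (induction n rule: int_induct[where k=0])
    case base then show ?case by (simp add: zpow_0)
  next
    case (step1 i)
    have "zpow (zpow h k) (i+1) = zpow h k \<circ> zpow h (k*i)" using zpow_up[OF bk] step1 by simp
    also have "\<dots> = zpow h (k*(i+1))" using zpow_add[OF assms, of k "k*i"] by (simp add: algebra_simps)
    finally show ?case .
  next
    case (step2 i)
    have "zpow (zpow h k) (i-1) = zpow h (-k) \<circ> zpow h (k*i)" using zpow_down[OF bk] step2 ik by simp
    also have "\<dots> = zpow h (k*(i-1))" using zpow_add[OF assms, of "-k" "k*i"] by (simp add: algebra_simps)
    finally show ?case .
  qed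
qed

lemma cell_sub:
  fixes f :: "'a::metric_space \<Rightarrow> 'a"
  assumes "bij f" shows "proximal_cell (zpow f k) x \<subseteq> proximal_cell f x"
proof
  fix y assume "y \<in> proximal_cell (zpow f k) x"
  then have h0: "(INF n::int. dist (zpow f (k*n) x) (zpow f (k*n) y)) = 0"
    by (simp add: proximal_cell_def zpow_mult[OF assms])
  let ?d = "\<lambda>m::int. dist (zpow f m x) (zpow f m y)"
  have bb: "bdd_below (range ?d)" by (rule bdd_belowI[of _ 0]) auto
  have "?d (k*n) \<ge> (INF m. ?d m)" for n by (rule cINF_lower[OF bb]) simp
  then have "(INF n. ?d (k*n)) \<ge> (INF m. ?d m)" by (intro cINF_greatest) auto
  moreover have "(INF m. ?d m) \<ge> 0" by (intro cINF_greatest) auto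
  ultimately have "(INF m. ?d m) = 0" using h0 by simp
  then show "y \<in> proximal_cell f x" by (simp add: proximal_cell_def)
qed

theorem lemma3p4:
  fixes f :: "'a::metric_space \<Rightarrow> 'a" and k :: int
  assumes "\<exists>g. homeomorphism UNIV UNIV f g"
  shows "(\<forall>\<mu>::'a measure. prob_space \<mu> \<and> sets \<mu> = sets borel \<and> inner_distal_measure \<mu> f
            \<longrightarrow> inner_distal_measure \<mu> (zpow f k))
         \<and> (inner_distal f \<longrightarrow> inner_distal (zpow f k))"
proof -
  obtain g where "homeomorphism UNIV UNIV f g" using assms by blast
  then have "bij f" unfolding homeomorphism_def
    by (metis UNIV_I bij_betw_byWitness subset_UNIV)
  then have sub: "interior (proximal_cell (zpow f k) x) \<subseteq> interior (proximal_cell f x)" for x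
    using cell_sub interior_mono by blast
  show ?thesis
  proof (intro conjI allI impI)
    fix \<mu> :: "'a measure"
    assume h: "prob_space \<mu> \<and> sets \<mu> = sets borel \<and> inner_distal_measure \<mu> f"
    then interpret prob_space \<mu> by blast
    show "inner_distal_measure \<mu> (zpow f k)" unfolding inner_distal_measure_def
    proof
      fix x
      have m: "interior (proximal_cell f x) \<in> sets \<mu>" using h by simp
      have "measure \<mu> (interior (proximal_cell (zpow f k) x)) \<le> measure \<mu> (interior (proximal_cell f x))"
        using finite_measure_mono[OF sub m] .
      also have "\<dots> = 0" using h by (simp add: inner_distal_measure_def)
      finally show "measure \<mu> (interior (proximal_cell (zpow f k) x)) = 0" by (simp add: antisym)
    qed
  next
    assume "inner_distal f"
    then show "inner_distal (zpow f k)" using sub unfolding inner_distal_def by blast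
  qed
qed

end
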